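(* Let $\kappa\ge1$, $n=2^\kappa-1$, $0<\epsilon<1$, and let $G_{\mathrm{simp}}$ be a binary $\kappa\times n$ matrix whose columns are exactly the $2^\kappa-1$ nonzero vectors of $\mathbb{F}_2^\kappa$ (the simplex code generator). Then for every binary $\kappa\times n$ matrix $G$, $\lambda(n,\epsilon,q(G_{\mathrm{simp}}))\le\lambda(n,\epsilon,q(G))$.
   Context: $W=\mathbb{F}_2^\kappa$; $\nu(i)\in W$ is the binary expansion of $i\in\{0,\dots,2^\kappa-1\}$. For a binary $\kappa\times n$ matrix $G$, $q(G)=(q_0,\dots,q_{2^\kappa-1})$ with $q_i$ the number of columns of $G$ equal to $\nu(i)$ divided by $n$. For a subspace $S\subseteq W$, $\zeta(S,q)=\sum_{i:\nu(i)\in S}q_i$; $\Xi(W,\kappa-1)$ is the set of $(\kappa-1)$-dimensional subspaces of $W$. $\lambda(n,\epsilon,q)=(2-\epsilon)^n2^{-\kappa}\Big(1+\sum_{S\in\Xi(W,\kappa-1)}\big(\tfrac{\epsilon}{2-\epsilon}\big)^{n(1-\zeta(S,q))}\Big)-1$, which for $q=q(G)$ is the $\chi^2$ divergence between $p_{MZ}$ and $p_Mp_Z$ for the coset code with base-code generator $G$ (uniform message) over a binary erasure channel with erasure probability $\epsilon$. *)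

theory Defs
  imports Complex_Main
begin

text \<open>Vectors of W = F_2^kappa are represented as functions nat => bool
  that vanish (are False) outside the coordinates 0..kappa-1.\<close>

definition W :: "nat \<Rightarrow> (nat \<Rightarrow> bool) set" where
  "W \<kappa> = {v. \<forall>j. \<kappa> \<le> j \<longrightarrow> \<not> v j}"

definition zerov :: "nat \<Rightarrow> bool" where
  "zerov = (\<lambda>j. False)"

definition addv :: "(nat \<Rightarrow> bool) \<Rightarrow> (nat \<Rightarrow> bool) \<Rightarrow> (nat \<Rightarrow> bool)" where
  "addv u v = (\<lambda>j. u j \<noteq> v j)"

definition nu :: "nat \<Rightarrow> nat \<Rightarrow> (nat \<Rightarrow> bool)" where
  "nu \<kappa> i = (\<lambda>j. j < \<kappa> \<and> bit i j)"

text \<open>A binary kappa x n matrix is a function G r c (row r < kappa, column c < n);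
  its c-th column as a vector of W.\<close>
definition col :: "nat \<Rightarrow> (nat \<Rightarrow> nat \<Rightarrow> bool) \<Rightarrow> nat \<Rightarrow> (nat \<Rightarrow> bool)" where
  "col \<kappa> G c = (\<lambda>r. r < \<kappa> \<and> G r c)"

definition qdist :: "nat \<Rightarrow> nat \<Rightarrow> (nat \<Rightarrow> nat \<Rightarrow> bool) \<Rightarrow> nat \<Rightarrow> real" where
  "qdist \<kappa> n G i = real (card {c. c < n \<and> col \<kappa> G c = nu \<kappa> i}) / real n"

text \<open>F_2-linear subspaces of W (over F_2, closure under addition plus
  containing 0 is exactly being a linear subspace).\<close>
definition subspace2 :: "nat \<Rightarrow> (nat \<Rightarrow> bool) set \<Rightarrow> bool" where
  "subspace2 \<kappa> S \<longleftrightarrow> S \<subseteq> W \<kappa> \<and> zerov \<in> S \<and> (\<forall>u\<in>S. \<forall>v\<in>S. addv u v \<in> S)"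

text \<open>Xi(W, kappa-1): subspaces of dimension kappa-1; an F_2-subspace has
  dimension d iff it has 2^d elements.\<close>
definition Xi :: "nat \<Rightarrow> (nat \<Rightarrow> bool) set set" where
  "Xi \<kappa> = {S. subspace2 \<kappa> S \<and> card S = 2 ^ (\<kappa> - 1)}"

definition zeta :: "nat \<Rightarrow> (nat \<Rightarrow> bool) set \<Rightarrow> (nat \<Rightarrow> real) \<Rightarrow> real" where
  "zeta \<kappa> S q = (\<Sum>i | i < 2 ^ \<kappa> \<and> nu \<kappa> i \<in> S. q i)"

definition lam :: "nat \<Rightarrow> nat \<Rightarrow> real \<Rightarrow> (nat \<Rightarrow> real) \<Rightarrow> real" where
  "lam \<kappa> n \<epsilon> q =
     (2 - \<epsilon>) ^ n * 2 powr (- real \<kappa>) *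
     (1 + (\<Sum>S\<in>Xi \<kappa>. (\<epsilon> / (2 - \<epsilon>)) powr (real n * (1 - zeta \<kappa> S q)))) - 1"

end

theory Submission
  imports Defs
begin

lemma W_image: "W k = (\<lambda>A j. j \<in> A) ` Pow {..<k}"
proof
  show "W k \<subseteq> (\<lambda>A j. j \<in> A) ` Pow {..<k}"
  proof
    fix v assume "v \<in> W k"
    hence "{j. v j} \<subseteq> {..<k}" by (auto simp: W_def not_le[symmetric])
    moreover have "v = (\<lambda>j. j \<in> {j. v j})" by auto
    ultimately show "v \<in> (\<lambda>A j. j \<in> A) ` Pow {..<k}" by blast
  qed
  show "(\<lambda>A j. j \<in> A) ` Pow {..<k} \<subseteq> W k" by (auto simp: W_def)
qed

lemma card_W: "card (W k) = 2 ^ k"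
proof -
  have "inj_on (\<lambda>A j. j \<in> A) (Pow {..<k})"
    by (rule inj_onI) (metis Collect_mem_eq)
  then show ?thesis unfolding W_image by (simp add: card_image card_Pow)
qed

lemma finite_W: "finite (W k)"
  unfolding W_image by simp

lemma nu_inj: "inj_on (nu k) {..<2^k}"
proof (rule inj_onI)
  fix i i' assume i: "i \<in> {..<2^k}" and i': "i' \<in> {..<2^k}" and e: "nu k i = nu k i'"
  have "take_bit k i = i" "take_bit k i' = i'" using i i' by (auto intro: take_bit_nat_eq_self)
  show "i = i'"
  proof (rule bit_eqI)
    fix m
    have "(m < k \<and> bit i m) = (m < k \<and> bit i' m)" using fun_cong[OF e, of m] by (simp add: nu_def)
    then show "bit i m = bit i' m"
      by (metis \<open>take_bit k i = i\<close> \<open>take_bit k i' = i'\<close> bit_take_bit_iff)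
  qed
qed

lemma nu_image: "nu k ` {..<2^k} = W k"
proof -
  have sub: "nu k ` {..<2^k} \<subseteq> W k" by (auto simp: nu_def W_def)
  have "card (nu k ` {..<2^k}) = card (W k)" using nu_inj by (simp add: card_image card_W)
  then show ?thesis using card_subset_eq[OF finite_W sub] by simp
qed

lemma col_W: "col k G c \<in> W k" by (auto simp: col_def W_def)

lemma n_zeta:
  assumes "S \<subseteq> W k" "n > 0"
  shows "real n * zeta k S (qdist k n G) = real (card {c. c < n \<and> col k G c \<in> S})"
proof -
  let ?I = "{i. i < 2 ^ k \<and> nu k i \<in> S}"
  let ?A = "\<lambda>i. {c. c < n \<and> col k G c = nu k i}"
  have "real n * zeta k S (qdist k n G) = (\<Sum>i\<in>?I. real (card (?A i)))"
    using assms(2) by (simp add: zeta_def qdist_def sum_distrib_left)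
  also have "\<dots> = real (\<Sum>i\<in>?I. card (?A i))" by simp
  also have "(\<Sum>i\<in>?I. card (?A i)) = card (\<Union>i\<in>?I. ?A i)"
    using nu_inj by (intro card_UN_disjoint[symmetric]) (auto simp: inj_on_def)
  also have "(\<Union>i\<in>?I. ?A i) = {c. c < n \<and> col k G c \<in> S}"
  proof
    show "(\<Union>i\<in>?I. ?A i) \<subseteq> {c. c < n \<and> col k G c \<in> S}" by auto
    show "{c. c < n \<and> col k G c \<in> S} \<subseteq> (\<Union>i\<in>?I. ?A i)"
    proof
      fix c assume c: "c \<in> {c. c < n \<and> col k G c \<in> S}"
      then have "col k G c \<in> nu k ` {..<2^k}" using col_W nu_image by blast
      then obtain i where "i < 2^k" "col k G c = nu k i" by auto
      then show "c \<in> (\<Union>i\<in>?I. ?A i)" using c by auto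
    qed
  qed
  finally show ?thesis .
qed

lemma n_one_minus_zeta:
  assumes "S \<subseteq> W k" "n > 0"
  shows "real n * (1 - zeta k S (qdist k n G)) = real (card {c. c < n \<and> col k G c \<notin> S})"
proof -
  have "{..<n} = {c. c < n \<and> col k G c \<in> S} \<union> {c. c < n \<and> col k G c \<notin> S}" by auto
  then have "n = card {c. c < n \<and> col k G c \<in> S} + card {c. c < n \<and> col k G c \<notin> S}"
    by (metis (no_types, lifting) card_Un_disjoint card_lessThan disjoint_iff finite_lessThan
        finite_Un mem_Collect_eq)
  then show ?thesis using n_zeta[OF assms, of G] by (simp add: algebra_simps)
qed



definition Tr :: "(nat \<Rightarrow> bool) \<Rightarrow> nat \<Rightarrow> (nat \<Rightarrow> bool) \<Rightarrow> (nat \<Rightarrow> bool)" where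
  "Tr w j x = (if x j then addv x w else x)"

definition fcount :: "nat \<Rightarrow> (nat \<Rightarrow> bool) \<Rightarrow> nat" where
  "fcount k v = card {S\<in>Xi k. v \<notin> S}"

lemma addv_W: "u \<in> W k \<Longrightarrow> v \<in> W k \<Longrightarrow> addv u v \<in> W k"
  by (auto simp: W_def addv_def)

lemma Tr_invol: "\<not> w j \<Longrightarrow> Tr w j (Tr w j x) = x"
  by (auto simp: Tr_def addv_def)

lemma Tr_inj: "\<not> w j \<Longrightarrow> inj (Tr w j)"
  by (metis Tr_invol injI)

lemma Tr_W: "w \<in> W k \<Longrightarrow> x \<in> W k \<Longrightarrow> Tr w j x \<in> W k"
  by (auto simp: Tr_def addv_W)

lemma Tr_add: "\<not> w j \<Longrightarrow> Tr w j (addv x y) = addv (Tr w j x) (Tr w j y)"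
  by (auto simp: Tr_def addv_def fun_eq_iff)

lemma Tr_zero: "Tr w j zerov = zerov"
  by (simp add: Tr_def zerov_def)

lemma Tr_Xi:
  assumes "\<not> w j" "w \<in> W k" "S \<in> Xi k"
  shows "Tr w j ` S \<in> Xi k"
proof -
  have S: "S \<subseteq> W k" "zerov \<in> S" "\<forall>u\<in>S. \<forall>v\<in>S. addv u v \<in> S" "card S = 2^(k-1)"
    using assms(3) by (auto simp: Xi_def subspace2_def)
  have "Tr w j ` S \<subseteq> W k" using S(1) Tr_W assms(2) by blast
  moreover have "zerov \<in> Tr w j ` S" using S(2) Tr_zero by (metis image_eqI)
  moreover have "\<forall>u\<in>Tr w j ` S. \<forall>v\<in>Tr w j ` S. addv u v \<in> Tr w j ` S"
  proof (intro ballI)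
    fix x y assume "x \<in> Tr w j ` S" "y \<in> Tr w j ` S"
    then obtain a b where ab: "a \<in> S" "b \<in> S" "x = Tr w j a" "y = Tr w j b" by blast
    then have "addv x y = Tr w j (addv a b)" using Tr_add[of w j, OF assms(1)] by simp
    then show "addv x y \<in> Tr w j ` S" using S(3) ab by blast
  qed
  moreover have "card (Tr w j ` S) = 2^(k-1)"
    using S(4) card_image Tr_inj[of w j, OF assms(1)] by (metis inj_on_subset subset_UNIV)
  ultimately show ?thesis by (simp add: Xi_def subspace2_def)
qed

lemma fcount_Tr:
  assumes "\<not> w j" "w \<in> W k"
  shows "fcount k (Tr w j v) = fcount k v"
proof -
  let ?T = "Tr w j"
  have im: "(image ?T) ` {S\<in>Xi k. v \<notin> S} = {S\<in>Xi k. ?T v \<notin> S}"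
  proof
    show "(image ?T) ` {S\<in>Xi k. v \<notin> S} \<subseteq> {S\<in>Xi k. ?T v \<notin> S}"
      using Tr_Xi[OF assms] Tr_inj[of w j, OF assms(1)] by (auto dest: injD)
    show "{S\<in>Xi k. ?T v \<notin> S} \<subseteq> (image ?T) ` {S\<in>Xi k. v \<notin> S}"
    proof
      fix S assume S: "S \<in> {S\<in>Xi k. ?T v \<notin> S}"
      have "S = ?T ` (?T ` S)" using Tr_invol[of w j, OF assms(1)] by (simp add: image_image)
      moreover have "?T ` S \<in> Xi k" using Tr_Xi[OF assms] S by auto
      moreover have "v \<notin> ?T ` S" using S Tr_invol[of w j, OF assms(1)] by (metis (mono_tags, lifting) image_iff mem_Collect_eq)
      ultimately show "S \<in> (image ?T) ` {S\<in>Xi k. v \<notin> S}" by blast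
    qed
  qed
  have "inj (image ?T)" using Tr_inj[of w j, OF assms(1)] by (simp add: inj_image_eq_iff inj_on_def)
  then have "card ((image ?T) ` {S\<in>Xi k. v \<notin> S}) = card {S\<in>Xi k. v \<notin> S}"
    by (meson card_image inj_on_subset subset_UNIV)
  then show ?thesis using im by (simp add: fcount_def)
qed

lemma fcount_shift:
  assumes "\<not> w j" "w \<in> W k" "x j"
  shows "fcount k (addv x w) = fcount k x"
  using fcount_Tr[OF assms(1,2), of x] assms(3) by (simp add: Tr_def)

lemma nonzero_bit: "v \<noteq> zerov \<Longrightarrow> \<exists>j. v j"
  by (auto simp: zerov_def)

lemma fcount_const:
  assumes "u \<in> W k" "v \<in> W k" "u \<noteq> zerov" "v \<noteq> zerov"
  shows "fcount k u = fcount k v"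
proof (cases "\<exists>j. u j \<and> v j")
  case True
  then obtain j where j: "u j" "v j" by blast
  have "addv u (addv u v) = v" by (auto simp: addv_def)
  moreover have "\<not> addv u v j" using j by (simp add: addv_def)
  ultimately show ?thesis using fcount_shift[of "addv u v" j k u] addv_W assms j by metis
next
  case False
  obtain j where j: "u j" using nonzero_bit assms(3) by blast
  obtain i where i: "v i" using nonzero_bit assms(4) by blast
  have 1: "fcount k (addv u v) = fcount k u"
    using fcount_shift[of v j k u] False j assms by blast
  have "addv (addv u v) u = v" by (auto simp: addv_def)
  moreover have "addv u v i" using False i by (auto simp: addv_def)
  moreover have "\<not> u i" using False i by blast
  ultimately have "fcount k v = fcount k (addv u v)"
    using fcount_shift[of u i k "addv u v"] assms by metis
  then show ?thesis using 1 by simp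
qed

lemma fcount_zero: "fcount k zerov = 0"
proof -
  have "{S\<in>Xi k. zerov \<notin> S} = {}" by (auto simp: Xi_def subspace2_def)
  then show ?thesis unfolding fcount_def by (metis card.empty)
qed



lemma finite_Xi: "finite (Xi k)"
proof -
  have "Xi k \<subseteq> Pow (W k)" by (auto simp: Xi_def subspace2_def)
  then show ?thesis using finite_W by (meson finite_Pow_iff finite_subset)
qed

lemma tangent:
  assumes "0 < r"
  shows "r powr a * (1 + (x - a) * ln r) \<le> r powr (x::real)"
proof -
  have "r powr x = r powr a * exp ((x - a) * ln r)"
    using assms by (simp add: powr_def exp_add[symmetric] algebra_simps)
  moreover have "1 + (x - a) * ln r \<le> exp ((x - a) * ln r)" by (rule exp_ge_add_one_self)
  ultimately show ?thesis using assms by (simp add: mult_left_mono)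
qed

lemma card_filter_sum: "finite A \<Longrightarrow> card {x\<in>A. P x} = (\<Sum>x\<in>A. if P x then 1 else (0::nat))"
  by (simp add: sum.inter_filter[symmetric])

lemma double_count:
  "(\<Sum>S\<in>Xi k. card {c. c < n \<and> col k G c \<notin> S}) = (\<Sum>c<n. fcount k (col k G c))"
proof -
  have "(\<Sum>S\<in>Xi k. card {c. c < n \<and> col k G c \<notin> S})
      = (\<Sum>S\<in>Xi k. \<Sum>c<n. if col k G c \<notin> S then 1 else (0::nat))"
  proof (rule sum.cong[OF refl])
    fix S
    have "{c. c < n \<and> col k G c \<notin> S} = {c\<in>{..<n}. col k G c \<notin> S}" by auto
    then show "card {c. c < n \<and> col k G c \<notin> S} = (\<Sum>c<n. if col k G c \<notin> S then 1 else (0::nat))"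
      using card_filter_sum[of "{..<n}"] by simp
  qed
  also have "\<dots> = (\<Sum>c<n. \<Sum>S\<in>Xi k. if col k G c \<notin> S then 1 else (0::nat))"
    by (rule sum.swap)
  also have "\<dots> = (\<Sum>c<n. fcount k (col k G c))"
    unfolding fcount_def using card_filter_sum[OF finite_Xi] by simp
  finally show ?thesis .
qed



theorem corollary3:
  fixes \<kappa> n :: nat and \<epsilon> :: real and Gsimp G :: "nat \<Rightarrow> nat \<Rightarrow> bool"
  assumes "\<kappa> \<ge> 1"
    and "n = 2 ^ \<kappa> - 1"
    and "0 < \<epsilon>" and "\<epsilon> < 1"
    and "bij_betw (col \<kappa> Gsimp) {..<n} (W \<kappa> - {zerov})"
  shows "lam \<kappa> n \<epsilon> (qdist \<kappa> n Gsimp) \<le> lam \<kappa> n \<epsilon> (qdist \<kappa> n G)"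
proof -
  have "(2::nat) ^ \<kappa> \<ge> 2 ^ 1" using assms(1) by (intro power_increasing) auto
  then have npos: "n > 0" using assms(2) by simp
  define r where "r = \<epsilon> / (2 - \<epsilon>)"
  have r0: "0 < r" and r1: "r < 1" using assms(3,4) by (auto simp: r_def field_simps)
  define m where "m H S = card {c. c < n \<and> col \<kappa> H c \<notin> S}" for H S
  define a :: nat where "a = 2 ^ (\<kappa> - 1)"
  define N where "N = card (Xi \<kappa>)"
  define K where "K = (2 - \<epsilon>) ^ n * 2 powr (- real \<kappa>)"
  have K0: "K > 0" using assms(4) by (simp add: K_def)
  have SW: "S \<subseteq> W \<kappa>" if "S \<in> Xi \<kappa>" for S using that by (auto simp: Xi_def subspace2_def)
  have lamE: "lam \<kappa> n \<epsilon> (qdist \<kappa> n H) = K * (1 + (\<Sum>S\<in>Xi \<kappa>. r powr real (m H S))) - 1" for H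
  proof -
    have "(\<Sum>S\<in>Xi \<kappa>. (\<epsilon> / (2 - \<epsilon>)) powr (real n * (1 - zeta \<kappa> S (qdist \<kappa> n H))))
        = (\<Sum>S\<in>Xi \<kappa>. r powr real (m H S))"
      by (rule sum.cong[OF refl]) (simp add: r_def m_def n_one_minus_zeta[OF SW npos])
    then show ?thesis by (simp add: lam_def K_def)
  qed
  have inj: "inj_on (col \<kappa> Gsimp) {..<n}" and img: "col \<kappa> Gsimp ` {..<n} = W \<kappa> - {zerov}"
    using assms(5) by (auto simp: bij_betw_def)
  have msimp: "m Gsimp S = a" if S: "S \<in> Xi \<kappa>" for S
  proof -
    have z: "zerov \<in> S" and cS: "card S = 2 ^ (\<kappa> - 1)" using S by (auto simp: Xi_def subspace2_def)
    have "col \<kappa> Gsimp ` {c. c < n \<and> col \<kappa> Gsimp c \<notin> S} = W \<kappa> - S"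
      using img z by auto
    moreover have "inj_on (col \<kappa> Gsimp) {c. c < n \<and> col \<kappa> Gsimp c \<notin> S}"
      using inj by (rule inj_on_subset) auto
    ultimately have "m Gsimp S = card (W \<kappa> - S)" unfolding m_def by (metis card_image)
    also have "\<dots> = 2 ^ \<kappa> - 2 ^ (\<kappa> - 1)"
      using card_Diff_subset[OF finite_subset[OF SW[OF S] finite_W] SW[OF S]] card_W cS by simp
    also have "\<dots> = a" unfolding a_def using assms(1)
      by (metis One_nat_def Suc_diff_1 diff_add_inverse2 less_le_trans mult_2 power_Suc zero_less_one)
    finally show ?thesis .
  qed
  have sumsimp: "(\<Sum>S\<in>Xi \<kappa>. r powr real (m Gsimp S)) = real N * r powr real a"
    using msimp by (simp add: N_def)
  have cnt: "(\<Sum>c<n. fcount \<kappa> (col \<kappa> G c)) \<le> (\<Sum>c<n. fcount \<kappa> (col \<kappa> Gsimp c))"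
  proof (rule sum_mono)
    fix c assume c: "c \<in> {..<n}"
    have s: "col \<kappa> Gsimp c \<in> W \<kappa>" "col \<kappa> Gsimp c \<noteq> zerov" using img c by auto
    show "fcount \<kappa> (col \<kappa> G c) \<le> fcount \<kappa> (col \<kappa> Gsimp c)"
    proof (cases "col \<kappa> G c = zerov")
      case True then show ?thesis by (simp add: fcount_zero)
    next
      case False then show ?thesis using fcount_const[OF col_W s(1) False s(2)] by simp
    qed
  qed
  have Msum: "(\<Sum>S\<in>Xi \<kappa>. m G S) \<le> N * a"
  proof -
    have "(\<Sum>S\<in>Xi \<kappa>. m G S) \<le> (\<Sum>S\<in>Xi \<kappa>. m Gsimp S)"
      using cnt double_count[where k=\<kappa> and n=n and G=G] double_count[where k=\<kappa> and n=n and G=Gsimp] by (simp add: m_def)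
    also have "\<dots> = N * a" using msimp by (simp add: N_def)
    finally show ?thesis .
  qed
  have Mreal: "(\<Sum>S\<in>Xi \<kappa>. real (m G S)) \<le> real N * real a"
    using Msum by (metis of_nat_le_iff of_nat_mult of_nat_sum)
  have "(\<Sum>S\<in>Xi \<kappa>. r powr real (m G S))
      \<ge> (\<Sum>S\<in>Xi \<kappa>. r powr real a * (1 + (real (m G S) - real a) * ln r))"
    by (rule sum_mono) (rule tangent[OF r0])
  also have "(\<Sum>S\<in>Xi \<kappa>. r powr real a * (1 + (real (m G S) - real a) * ln r))
      = real N * r powr real a + r powr real a * ln r * ((\<Sum>S\<in>Xi \<kappa>. real (m G S)) - real N * real a)"
    by (simp add: algebra_simps sum.distrib sum_distrib_left sum_subtractf N_def)
  finally have ge: "real N * r powr real a + r powr real a * ln r * ((\<Sum>S\<in>Xi \<kappa>. real (m G S)) - real N * real a)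
      \<le> (\<Sum>S\<in>Xi \<kappa>. r powr real (m G S))" .
  have "ln r < 0" using r0 r1 by simp
  then have "r powr real a * ln r * ((\<Sum>S\<in>Xi \<kappa>. real (m G S)) - real N * real a) \<ge> 0"
    using Mreal r0 by (intro mult_nonpos_nonpos) (auto intro: mult_nonneg_nonpos)
  with ge sumsimp have "(\<Sum>S\<in>Xi \<kappa>. r powr real (m Gsimp S)) \<le> (\<Sum>S\<in>Xi \<kappa>. r powr real (m G S))"
    by linarith
  then show ?thesis unfolding lamE using K0 by simp
qed


end
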